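(* Let $\langle X,d\rangle$ be a metric space. The following are equivalent: (1) $X$ is cofinally Bourbaki quasi-complete; (2) whenever $f:X\to\mathbb{R}$ is a continuous, nowhere-zero function that maps every cofinally Bourbaki quasi-Cauchy sequence in $X$ to a cofinally Bourbaki-Cauchy sequence in $\mathbb{R}$, the reciprocal $1/f$ is also continuous and maps every cofinally Bourbaki quasi-Cauchy sequence in $X$ to a cofinally Bourbaki-Cauchy sequence in $\mathbb{R}$.
   Context: For $\varepsilon>0$, an $\varepsilon$-chain joining $x,y$ is a finite sequence $x=x_0,\dots,x_n=y$ with $d(x_{i-1},x_i)<\varepsilon$. A sequence $\langle x_n\rangle$ in $X$ is cofinally Bourbaki quasi-Cauchy if for every $\varepsilon>0$ there is an infinite $N_\varepsilon\subseteq\mathbb{N}$ such that any $x_j,x_k$ with $j,k\in N_\varepsilon$ can be joined by an $\varepsilon$-chain; $X$ is cofinally Bourbaki quasi-complete if every such sequence has a cluster point. In a metric space $\langle Y,\rho\rangle$, let $S^1_\rho(p,\varepsilon)$ be the open ball of radius $\varepsilon$ about $p$ and $S^{m}_\rho(p,\varepsilon)=\{y: \rho(y,S^{m-1}_\rho(p,\varepsilon))<\varepsilon\}$. A sequence $\langle y_n\rangle$ in $Y$ is cofinally Bourbaki-Cauchy if for every $\varepsilon>0$ there exist an infinite $N_\varepsilon\subseteq\mathbb{N}$, $m\in\mathbb{N}$ and $p\in Y$ with $y_n\in S^m_\rho(p,\varepsilon)$ for all $n\in N_\varepsilon$. *)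

theory Defs
  imports "HOL-Analysis.Analysis"
begin

definition eps_chain_joins :: "real \<Rightarrow> 'a::metric_space \<Rightarrow> 'a \<Rightarrow> bool" where
  "eps_chain_joins e x y \<longleftrightarrow>
     (\<exists>(z::nat \<Rightarrow> 'a) n. z 0 = x \<and> z n = y \<and> (\<forall>i<n. dist (z i) (z (Suc i)) < e))"

definition cofinally_bourbaki_quasi_cauchy :: "(nat \<Rightarrow> 'a::metric_space) \<Rightarrow> bool" where
  "cofinally_bourbaki_quasi_cauchy s \<longleftrightarrow>
     (\<forall>e>0. \<exists>N::nat set. infinite N \<and> (\<forall>j\<in>N. \<forall>k\<in>N. eps_chain_joins e (s j) (s k)))"

definition cluster_point_seq :: "(nat \<Rightarrow> 'a::metric_space) \<Rightarrow> 'a \<Rightarrow> bool" where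
  "cluster_point_seq s x \<longleftrightarrow> (\<forall>e>0. \<forall>m. \<exists>n\<ge>m. dist (s n) x < e)"

text \<open>The metric space is the whole type 'a.\<close>
definition cofinally_bourbaki_quasi_complete :: "'a::metric_space itself \<Rightarrow> bool" where
  "cofinally_bourbaki_quasi_complete _ \<longleftrightarrow>
     (\<forall>s::nat \<Rightarrow> 'a. cofinally_bourbaki_quasi_cauchy s \<longrightarrow> (\<exists>x. cluster_point_seq s x))"

text \<open>Iterated enlargements: bourbaki_ball p e m is S^(m+1)(p,e) of the paper
  (index shifted by one: bourbaki_ball p e 0 is the open ball S^1).\<close>
primrec bourbaki_ball :: "'a::metric_space \<Rightarrow> real \<Rightarrow> nat \<Rightarrow> 'a set" where
  "bourbaki_ball p e 0 = ball p e"
| "bourbaki_ball p e (Suc m) = {y. infdist y (bourbaki_ball p e m) < e}"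

definition cofinally_bourbaki_cauchy :: "(nat \<Rightarrow> 'a::metric_space) \<Rightarrow> bool" where
  "cofinally_bourbaki_cauchy s \<longleftrightarrow>
     (\<forall>e>0. \<exists>N::nat set. \<exists>m p. infinite N \<and> (\<forall>n\<in>N. s n \<in> bourbaki_ball p e m))"

end

theory Submission
  imports Defs
begin

lemma infdist_lessE:
  assumes "A \<noteq> {}" "infdist y A < e"
  obtains z where "z \<in> A" "dist y z < e"
proof -
  have "Inf ((\<lambda>a. dist y a) ` A) < e" using assms by (simp add: infdist_notempty)
  then obtain r where "r \<in> (\<lambda>a. dist y a) ` A" "r < e"
    using cInf_lessD[of "(\<lambda>a. dist y a) ` A" e] assms(1) by blast
  then show ?thesis using that by blast
qed

lemma bball_sub:
  fixes p :: "'a::metric_space"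
  assumes "e > 0"
  shows "bourbaki_ball p e m \<subseteq> ball p ((real m + 1) * e)"
proof (induction m)
  case 0
  then show ?case by simp
next
  case (Suc m)
  have ne: "bourbaki_ball p e m \<noteq> {}"
  proof (cases m)
    case 0 then show ?thesis using assms by auto
  next
    case (Suc k)
    have "p \<in> bourbaki_ball p e k" using assms by (induction k) auto
    then have "infdist p (bourbaki_ball p e k) = 0" by simp
    then show ?thesis using Suc assms by (metis bourbaki_ball.simps(2) empty_iff mem_Collect_eq)
  qed
  show ?case
  proof
    fix y assume "y \<in> bourbaki_ball p e (Suc m)"
    then have "infdist y (bourbaki_ball p e m) < e" by simp
    then obtain z where z: "z \<in> bourbaki_ball p e m" "dist y z < e"
      using infdist_lessE ne by metis
    then have "dist p z < (real m + 1) * e" using Suc.IH by auto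
    then have "dist p y < (real (Suc m) + 1) * e"
      using z dist_triangle[of p y z] by (simp add: dist_commute algebra_simps)
    then show "y \<in> ball p ((real (Suc m) + 1) * e)" by simp
  qed
qed

lemma ball_sub_bball:
  fixes p :: real
  assumes "e > 0"
  shows "ball p ((real m + 1) * e) \<subseteq> bourbaki_ball p e m"
proof (induction m)
  case 0
  then show ?case by simp
next
  case (Suc m)
  show ?case
  proof
    fix y assume y: "y \<in> ball p ((real (Suc m) + 1) * e)"
    define z where "z = p + (y - p) * ((real m + 1) / (real m + 2))"
    have d: "dist p y < (real m + 2) * e" using y by (simp add: algebra_simps)
    have "dist p z = dist p y * ((real m + 1) / (real m + 2))"
      by (simp add: z_def dist_real_def abs_mult)
    also have "\<dots> < (real m + 2) * e * ((real m + 1) / (real m + 2))"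
      using d by (intro mult_strict_right_mono) auto
    also have "\<dots> = (real m + 1) * e" by simp
    finally have "z \<in> bourbaki_ball p e m" using Suc.IH by auto
    moreover have "dist y z = dist p y / (real m + 2)"
      by (simp add: z_def dist_real_def abs_mult field_simps abs_minus_commute)
    moreover have "dist p y / (real m + 2) < e" using d by (simp add: field_simps)
    ultimately have "infdist y (bourbaki_ball p e m) < e"
      using infdist_le[of z "bourbaki_ball p e m" y] by linarith
    then show "y \<in> bourbaki_ball p e (Suc m)" by simp
  qed
qed

lemma bounded_cbc:
  fixes y :: "nat \<Rightarrow> real"
  assumes "infinite N" "\<forall>n\<in>N. \<bar>y n\<bar> \<le> B"
  shows "cofinally_bourbaki_cauchy y"
  unfolding cofinally_bourbaki_cauchy_def
proof (intro allI impI)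
  fix e :: real assume e: "e > 0"
  obtain m where m: "B / e < real m" using reals_Archimedean2 by blast
  have "B < real m * e" using m e by (simp add: field_simps)
  have "\<forall>n\<in>N. y n \<in> bourbaki_ball 0 e m"
  proof
    fix n assume "n \<in> N"
    then have "\<bar>y n\<bar> < (real m + 1) * e" using assms(2) \<open>B < real m * e\<close> e
      by (simp add: algebra_simps) (smt (verit))
    then have "y n \<in> ball 0 ((real m + 1) * e)" by simp
    then show "y n \<in> bourbaki_ball 0 e m" using ball_sub_bball[OF e] by blast
  qed
  then show "\<exists>N m p. infinite N \<and> (\<forall>n\<in>N. y n \<in> bourbaki_ball p e m)"
    using assms(1) by blast
qed

lemma cbc_bounded:
  fixes y :: "nat \<Rightarrow> real"
  assumes "cofinally_bourbaki_cauchy y"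
  obtains N B where "infinite N" "\<forall>n\<in>N. \<bar>y n\<bar> \<le> B"
proof -
  obtain N m p where N: "infinite N" "\<forall>n\<in>N. y n \<in> bourbaki_ball p 1 m"
    using assms unfolding cofinally_bourbaki_cauchy_def by (meson zero_less_one)
  have "\<forall>n\<in>N. \<bar>y n\<bar> \<le> \<bar>p\<bar> + (real m + 1)"
  proof
    fix n assume "n \<in> N"
    then have "y n \<in> ball p ((real m + 1) * 1)" using N bball_sub[of 1 p m] by auto
    then show "\<bar>y n\<bar> \<le> \<bar>p\<bar> + (real m + 1)" by (simp add: dist_real_def)
  qed
  then show ?thesis using that N(1) by blast
qed

theorem mainTheorem6:
  "cofinally_bourbaki_quasi_complete TYPE('a::metric_space) \<longleftrightarrow>
   (\<forall>f :: 'a \<Rightarrow> real.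
      (continuous_on UNIV f \<and> (\<forall>x. f x \<noteq> 0) \<and>
       (\<forall>s. cofinally_bourbaki_quasi_cauchy s \<longrightarrow> cofinally_bourbaki_cauchy (f \<circ> s)))
      \<longrightarrow>
      (continuous_on UNIV (\<lambda>x. 1 / f x) \<and>
       (\<forall>s. cofinally_bourbaki_quasi_cauchy s \<longrightarrow> cofinally_bourbaki_cauchy ((\<lambda>x. 1 / f x) \<circ> s))))"
proof
  assume C: "cofinally_bourbaki_quasi_complete TYPE('a)"
  show "\<forall>f :: 'a \<Rightarrow> real.
      (continuous_on UNIV f \<and> (\<forall>x. f x \<noteq> 0) \<and>
       (\<forall>s. cofinally_bourbaki_quasi_cauchy s \<longrightarrow> cofinally_bourbaki_cauchy (f \<circ> s)))
      \<longrightarrow>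
      (continuous_on UNIV (\<lambda>x. 1 / f x) \<and>
       (\<forall>s. cofinally_bourbaki_quasi_cauchy s \<longrightarrow> cofinally_bourbaki_cauchy ((\<lambda>x. 1 / f x) \<circ> s)))"
  proof (intro allI impI conjI)
    fix f :: "'a \<Rightarrow> real"
    assume H: "continuous_on UNIV f \<and> (\<forall>x. f x \<noteq> 0) \<and>
       (\<forall>s. cofinally_bourbaki_quasi_cauchy s \<longrightarrow> cofinally_bourbaki_cauchy (f \<circ> s))"
    then show "continuous_on UNIV (\<lambda>x. 1 / f x)"
      by (auto intro!: continuous_intros)
    fix s :: "nat \<Rightarrow> 'a" assume "cofinally_bourbaki_quasi_cauchy s"
    then obtain x where x: "cluster_point_seq s x"
      using C unfolding cofinally_bourbaki_quasi_complete_def by blast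
    have fx: "\<bar>f x\<bar> / 2 > 0" using H by auto
    have "isCont f x" using H by (simp add: continuous_on_eq_continuous_at)
    then obtain d where d: "d > 0" "\<forall>y. dist y x < d \<longrightarrow> dist (f y) (f x) < \<bar>f x\<bar> / 2"
      using fx unfolding continuous_at_eps_delta by blast
    define N where "N = {n. dist (s n) x < d}"
    have "infinite N"
      unfolding infinite_nat_iff_unbounded_le N_def
      using x d(1) unfolding cluster_point_seq_def by blast
    moreover have "\<forall>n\<in>N. \<bar>((\<lambda>x. 1 / f x) \<circ> s) n\<bar> \<le> 2 / \<bar>f x\<bar>"
    proof
      fix n assume "n \<in> N"
      then have "dist (f (s n)) (f x) < \<bar>f x\<bar> / 2" using d N_def by auto
      then have h: "\<bar>f (s n)\<bar> \<ge> \<bar>f x\<bar> / 2" by (simp add: dist_real_def) (smt (verit))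
      then have "1 / \<bar>f (s n)\<bar> \<le> 1 / (\<bar>f x\<bar> / 2)"
        using fx by (intro divide_left_mono) auto
      then show "\<bar>((\<lambda>x. 1 / f x) \<circ> s) n\<bar> \<le> 2 / \<bar>f x\<bar>" by simp
    qed
    ultimately show "cofinally_bourbaki_cauchy ((\<lambda>x. 1 / f x) \<circ> s)"
      by (rule bounded_cbc)
  qed
next
  assume R: "\<forall>f :: 'a \<Rightarrow> real.
      (continuous_on UNIV f \<and> (\<forall>x. f x \<noteq> 0) \<and>
       (\<forall>s. cofinally_bourbaki_quasi_cauchy s \<longrightarrow> cofinally_bourbaki_cauchy (f \<circ> s)))
      \<longrightarrow>
      (continuous_on UNIV (\<lambda>x. 1 / f x) \<and>
       (\<forall>s. cofinally_bourbaki_quasi_cauchy s \<longrightarrow> cofinally_bourbaki_cauchy ((\<lambda>x. 1 / f x) \<circ> s)))"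
  show "cofinally_bourbaki_quasi_complete TYPE('a)"
    unfolding cofinally_bourbaki_quasi_complete_def
  proof (rule ccontr)
    assume "\<not> (\<forall>s::nat \<Rightarrow> 'a. cofinally_bourbaki_quasi_cauchy s \<longrightarrow> (\<exists>x. cluster_point_seq s x))"
    then obtain s :: "nat \<Rightarrow> 'a" where s: "cofinally_bourbaki_quasi_cauchy s"
      and nc: "\<And>x. \<not> cluster_point_seq s x" by blast
    define T where "T = range (\<lambda>n. (s n, 1 / (real n + 1)))"
    define g where "g = (\<lambda>x. infdist (x, 0::real) T)"
    define f where "f = (\<lambda>x. min (g x) 1)"
    have Tne: "T \<noteq> {}" unfolding T_def by simp
    have gpos: "g x > 0" for x
    proof (rule ccontr)
      assume "\<not> g x > 0"
      then have "g x = 0" using infdist_nonneg[of "(x, 0::real)" T] unfolding g_def by linarith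
      then have cl: "(x, 0::real) \<in> closure T" using in_closure_iff_infdist_zero[OF Tne] g_def by simp
      have "cluster_point_seq s x"
        unfolding cluster_point_seq_def
      proof (intro allI impI)
        fix e :: real and m :: nat assume e: "e > 0"
        have "min e (1 / (real m + 1)) > 0" using e by simp
        then obtain q where q: "q \<in> T" "dist q (x, 0) < min e (1 / (real m + 1))"
          using cl unfolding closure_approachable by blast
        then obtain n where qn: "q = (s n, 1 / (real n + 1))" unfolding T_def by blast
        have "dist (s n) x < e" using q qn dist_fst_le[of q "(x,0)"] by simp
        moreover have "dist (1 / (real n + 1)) (0::real) < 1 / (real m + 1)"
          using q qn dist_snd_le[of q "(x,0)"] by simp
        then have "1 / (real n + 1) < 1 / (real m + 1)" by (simp add: dist_real_def)
        then have "n \<ge> m" by (simp add: field_simps)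
        ultimately show "\<exists>n\<ge>m. dist (s n) x < e" by blast
      qed
      then show False using nc by blast
    qed
    have gs: "g (s n) \<le> 1 / (real n + 1)" for n
    proof -
      have "(s n, 1 / (real n + 1)) \<in> T" unfolding T_def by blast
      then have "g (s n) \<le> dist (s n, 0::real) (s n, 1 / (real n + 1))"
        unfolding g_def by (rule infdist_le)
      also have "\<dots> = 1 / (real n + 1)" by (simp add: dist_Pair_Pair dist_real_def)
      finally show ?thesis .
    qed
    have fc: "continuous_on UNIV f"
      unfolding f_def g_def by (intro continuous_intros)
    have fnz: "\<forall>x. f x \<noteq> 0" using gpos unfolding f_def by (metis min_def less_irrefl zero_neq_one)
    have fb: "\<forall>t. cofinally_bourbaki_quasi_cauchy t \<longrightarrow> cofinally_bourbaki_cauchy (f \<circ> t)"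
    proof (intro allI impI)
      fix t :: "nat \<Rightarrow> 'a"
      have "\<forall>n\<in>UNIV. \<bar>(f \<circ> t) n\<bar> \<le> 1"
        using gpos unfolding f_def by (simp add: abs_le_iff less_imp_le)
      then show "cofinally_bourbaki_cauchy (f \<circ> t)"
        by (intro bounded_cbc[of UNIV]) auto
    qed
    have "cofinally_bourbaki_cauchy ((\<lambda>x. 1 / f x) \<circ> s)"
      using R fc fnz fb s by blast
    then obtain N B where N: "infinite N" "\<forall>n\<in>N. \<bar>((\<lambda>x. 1 / f x) \<circ> s) n\<bar> \<le> B"
      by (rule cbc_bounded)
    obtain n where n: "n \<in> N" "n > B"
      using N(1) unfolding infinite_nat_iff_unbounded
      by (metis reals_Archimedean2 of_nat_less_iff less_trans)
    have "f (s n) \<le> 1 / (real n + 1)" using gs unfolding f_def by (meson min.coboundedI1)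
    moreover have "f (s n) > 0" using gpos unfolding f_def by simp
    ultimately have "1 / f (s n) \<ge> real n + 1"
      by (simp add: field_simps)
    moreover have "\<bar>1 / f (s n)\<bar> \<le> B" using N(2) n(1) by simp
    ultimately show False using n(2) by linarith
  qed
qed

end
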